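(* The set $\mathrm{Rec}(N^* )$ of recognizable subsets of $N^*$ is uncountable.
   Context: $N^*$ is the commutative monoid of finite sequences of non-negative integers whose last entry is non-zero (including the empty sequence), with pointwise addition (shorter sequence padded by zeros) and the empty sequence as unit; equivalently the free commutative monoid on countably many generators, isomorphic to $(\mathbb{Z}_{>0},\times,1)$. A subset $S$ of a monoid $M$ is recognizable if there exist a finite monoid $N'$, a monoid morphism $\varphi\colon M \to N'$ and a subset $T \subseteq N'$ with $S = \varphi^{-1}(T)$. *)

theory Defs
  imports "HOL-Algebra.Group" "HOL-Library.Countable_Set"
begin

fun padd :: "nat list \<Rightarrow> nat list \<Rightarrow> nat list" where
  "padd [] ys = ys"
| "padd xs [] = xs"
| "padd (x # xs) (y # ys) = (x + y) # padd xs ys"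

text \<open>Removal of trailing zeros (needed only to be safe; sums of normalized sequences are normalized).\<close>
definition trim :: "nat list \<Rightarrow> nat list" where
  "trim xs = rev (dropWhile (\<lambda>x. x = 0) (rev xs))"

definition Nstar :: "nat list monoid" where
  "Nstar = \<lparr> carrier = {xs. xs = [] \<or> last xs \<noteq> 0},
             mult = (\<lambda>xs ys. trim (padd xs ys)),
             one = [] \<rparr>"

text \<open>Recognizable subsets of a monoid M: preimages of subsets of a finite monoid under a
  monoid morphism. Finite monoids are taken (up to isomorphism) with carrier in nat.\<close>
definition recognizable :: "('a, 'm) monoid_scheme \<Rightarrow> 'a set \<Rightarrow> bool" where
  "recognizable M S \<longleftrightarrow>
     (\<exists>(N :: nat monoid) \<phi> T.
        monoid N \<and> finite (carrier N) \<and>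
        \<phi> \<in> hom M N \<and> \<phi> \<one>\<^bsub>M\<^esub> = \<one>\<^bsub>N\<^esub> \<and>
        T \<subseteq> carrier N \<and>
        S = {x \<in> carrier M. \<phi> x \<in> T})"

definition Rec :: "('a, 'm) monoid_scheme \<Rightarrow> 'a set set" where
  "Rec M = {S. S \<subseteq> carrier M \<and> recognizable M S}"

end

theory Submission
  imports Defs
begin

definition supp :: "nat list \<Rightarrow> nat set" where
  "supp xs = {i. i < length xs \<and> xs ! i \<noteq> 0}"

lemma supp_Nil[simp]: "supp [] = {}"
  by (simp add: supp_def)

lemma supp_Cons: "supp (x # xs) = (if x = 0 then {} else {0}) \<union> Suc ` supp xs"
proof (rule Set.set_eqI)
  fix i show "i \<in> supp (x # xs) \<longleftrightarrow> i \<in> (if x = 0 then {} else {0}) \<union> Suc ` supp xs"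
    by (cases i) (auto simp: supp_def)
qed

lemma supp_padd: "supp (padd xs ys) = supp xs \<union> supp ys"
  by (induction xs ys rule: padd.induct) (auto simp: supp_Cons)

lemma supp_append_zeros: "supp (xs @ replicate n 0) = supp xs"
  proof -
  have "i < length xs" if "i < length xs + n" "replicate n (0::nat) ! (i - length xs) \<noteq> 0" for i
    using that by (metis add_diff_inverse_nat nat_add_left_cancel_less nth_replicate)
  then show ?thesis by (auto simp: supp_def nth_append split: if_splits)
qed

lemma supp_trim: "supp (trim xs) = supp xs"
proof -
  let ?P = "\<lambda>x::nat. x = 0"
  have "rev xs = takeWhile ?P (rev xs) @ dropWhile ?P (rev xs)" by simp
  moreover have "takeWhile ?P (rev xs) = replicate (length (takeWhile ?P (rev xs))) 0"
    by (metis (mono_tags) replicate_length_same set_takeWhileD)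
  ultimately have "rev xs = replicate (length (takeWhile ?P (rev xs))) 0 @ dropWhile ?P (rev xs)"
    by simp
  then have "xs = trim xs @ replicate (length (takeWhile ?P (rev xs))) 0"
    unfolding trim_def by (metis rev_append rev_replicate rev_rev_ident)
  then show ?thesis by (metis supp_append_zeros)
qed
definition B2 :: "nat monoid" where
  "B2 = \<lparr>carrier = {0, 1}, mult = max, one = 0\<rparr>"

lemma monoid_B2: "monoid B2"
  by (unfold_locales) (auto simp: B2_def)

definition phi :: "nat set \<Rightarrow> nat list \<Rightarrow> nat" where
  "phi A xs = (if supp xs \<inter> A \<noteq> {} then 1 else 0)"

definition SA :: "nat set \<Rightarrow> nat list set" where
  "SA A = {x \<in> carrier Nstar. phi A x \<in> {1}}"

lemma SA_Rec: "SA A \<in> Rec Nstar"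
proof -
  have "phi A \<in> hom Nstar B2"
    by (auto simp: hom_def B2_def Nstar_def phi_def supp_trim supp_padd)
  moreover have "phi A \<one>\<^bsub>Nstar\<^esub> = \<one>\<^bsub>B2\<^esub>"
    by (simp add: Nstar_def B2_def phi_def)
  moreover have "finite (carrier B2)" "{1} \<subseteq> carrier B2" by (auto simp: B2_def)
  ultimately have "recognizable Nstar (SA A)"
    unfolding recognizable_def SA_def using monoid_B2 by blast
  then show ?thesis by (simp add: Rec_def SA_def)
qed

lemma e_in: "replicate i 0 @ [1] \<in> SA A \<longleftrightarrow> i \<in> A"
proof -
  have "supp (replicate i 0 @ [1]) = {i}"
    by (auto simp: supp_def nth_append less_Suc_eq)
  then show ?thesis by (auto simp: SA_def Nstar_def phi_def)
qed

lemma inj_SA: "inj SA"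
  by (rule injI) (metis e_in subsetI subset_antisym)

lemma uncountable_nat_sets: "uncountable (UNIV :: nat set set)"
proof
  assume "countable (UNIV :: nat set set)"
  then obtain g :: "nat \<Rightarrow> nat set" where "range g = UNIV"
    by (metis uncountable_def UNIV_not_empty)
  then obtain n where "g n = {m. m \<notin> g m}" by (metis UNIV_I imageE)
  then show False by blast
qed

theorem mainTheorem11:
  shows "uncountable (Rec Nstar)"
proof
  assume "countable (Rec Nstar)"
  then have "countable (SA ` UNIV)"
    by (rule countable_subset[rotated]) (auto simp: SA_Rec)
  then have "countable (UNIV :: nat set set)"
    using countable_image_inj_on inj_SA by blast
  then show False using uncountable_nat_sets by blast
qed

end
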